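(* Let $G$ and $H$ be two nontrivial connected graphs with orders $m$ and $n$ respectively. Then $$C_{cc}(G\Box H)=\max\{n\cdot C_{cc}(G),\ m\cdot C_{cc}(H)\}.$$
   Context: All graphs are finite, simple and undirected. For a graph $G$ and $S\subseteq V(G)$, the cycle interval $\langle S\rangle$ consists of the vertices of $S$ together with every vertex $w\in V(G)\setminus S$ such that $G[S\cup\{w\}]$ contains a cycle through $w$; $S$ is cycle convex if $\langle S\rangle=S$. The cycle convexity number $C_{cc}(G)$ is the maximum cardinality of a proper (i.e. $\neq V(G)$) cycle convex subset of $V(G)$. The Cartesian product $G\Box H$ has vertex set $V(G)\times V(H)$, with $(g_1,h_1)\sim(g_2,h_2)$ iff ($g_1\sim g_2$ and $h_1=h_2$) or ($g_1=g_2$ and $h_1\sim h_2$). A graph is nontrivial if it has at least two vertices. *)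

theory Defs
  imports Main
begin

definition graph :: "'a set \<Rightarrow> ('a \<Rightarrow> 'a \<Rightarrow> bool) \<Rightarrow> bool" where
  "graph V E \<longleftrightarrow> finite V \<and> (\<forall>x y. E x y \<longrightarrow> x \<in> V \<and> y \<in> V)
     \<and> (\<forall>x y. E x y \<longrightarrow> E y x) \<and> (\<forall>x. \<not> E x x)"

definition walk :: "('a \<Rightarrow> 'a \<Rightarrow> bool) \<Rightarrow> 'a list \<Rightarrow> bool" where
  "walk E xs \<longleftrightarrow> (\<forall>i. Suc i < length xs \<longrightarrow> E (xs ! i) (xs ! Suc i))"

definition connected_graph :: "'a set \<Rightarrow> ('a \<Rightarrow> 'a \<Rightarrow> bool) \<Rightarrow> bool" where
  "connected_graph V E \<longleftrightarrow> V \<noteq> {} \<and>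
     (\<forall>x\<in>V. \<forall>y\<in>V. \<exists>xs. xs \<noteq> [] \<and> hd xs = x \<and> last xs = y \<and> walk E xs)"

definition cycle_through :: "('a \<Rightarrow> 'a \<Rightarrow> bool) \<Rightarrow> 'a set \<Rightarrow> 'a \<Rightarrow> bool" where
  "cycle_through E S w \<longleftrightarrow> (\<exists>cs. distinct cs \<and> length cs \<ge> 3 \<and> set cs \<subseteq> S
      \<and> hd cs = w \<and> walk E cs \<and> E (last cs) (hd cs))"

definition cycle_interval :: "'a set \<Rightarrow> ('a \<Rightarrow> 'a \<Rightarrow> bool) \<Rightarrow> 'a set \<Rightarrow> 'a set" where
  "cycle_interval V E S = S \<union> {w \<in> V - S. cycle_through E (S \<union> {w}) w}"

definition cycle_convex :: "'a set \<Rightarrow> ('a \<Rightarrow> 'a \<Rightarrow> bool) \<Rightarrow> 'a set \<Rightarrow> bool" where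
  "cycle_convex V E S \<longleftrightarrow> S \<subseteq> V \<and> cycle_interval V E S = S"

definition C_cc :: "'a set \<Rightarrow> ('a \<Rightarrow> 'a \<Rightarrow> bool) \<Rightarrow> nat" where
  "C_cc V E = Max {card S | S. S \<subseteq> V \<and> S \<noteq> V \<and> cycle_convex V E S}"

definition cart_vertices :: "'a set \<Rightarrow> 'b set \<Rightarrow> ('a \<times> 'b) set" where
  "cart_vertices V W = V \<times> W"

definition cart_edges :: "('a \<Rightarrow> 'a \<Rightarrow> bool) \<Rightarrow> ('b \<Rightarrow> 'b \<Rightarrow> bool)
    \<Rightarrow> ('a \<times> 'b) \<Rightarrow> ('a \<times> 'b) \<Rightarrow> bool" where
  "cart_edges E F p q \<longleftrightarrow>
     (E (fst p) (fst q) \<and> snd p = snd q) \<or> (fst p = fst q \<and> F (snd p) (snd q))"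

end

theory Submission
  imports Defs
begin

lemma walk_Nil[simp]: "walk E []" by (simp add: walk_def)
lemma walk_single[simp]: "walk E [x]" by (simp add: walk_def)
lemma walk_Cons2[simp]: "walk E (x # y # zs) \<longleftrightarrow> E x y \<and> walk E (y # zs)"
proof
  assume "walk E (x # y # zs)"
  then show "E x y \<and> walk E (y # zs)"
    unfolding walk_def by (metis Suc_less_eq length_Cons nth_Cons_0 nth_Cons_Suc zero_less_Suc)
next
  assume a: "E x y \<and> walk E (y # zs)"
  show "walk E (x # y # zs)" unfolding walk_def
  proof (intro allI impI)
    fix i assume "Suc i < length (x # y # zs)"
    then show "E ((x # y # zs) ! i) ((x # y # zs) ! Suc i)"
      using a unfolding walk_def by (cases i) auto
  qed
qed

lemma walk_ConsD: "walk E (a # xs) \<Longrightarrow> walk E xs"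
  by (cases xs) auto

lemma walk_suffix: "walk E (us @ vs) \<Longrightarrow> walk E vs"
  by (induction us) (auto dest: walk_ConsD)

lemma walk_map: "walk E xs \<Longrightarrow> (\<And>x y. E x y \<Longrightarrow> E' (f x) (f y)) \<Longrightarrow> walk E' (map f xs)"
  by (induction xs rule: induct_list012) auto

lemma walk_induct_last:
  "walk E xs \<Longrightarrow> xs \<noteq> [] \<Longrightarrow> P (hd xs) \<Longrightarrow> (\<And>x y. E x y \<Longrightarrow> P x \<Longrightarrow> P y) \<Longrightarrow> P (last xs)"
proof (induction xs rule: induct_list012)
  case (3 x y zs)
  then show ?case by auto
qed auto

lemma walk_to_path:
  "walk (\<lambda>x y. R x y \<or> x = y) xs \<Longrightarrow> xs \<noteq> [] \<Longrightarrow>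
   \<exists>ys. distinct ys \<and> ys \<noteq> [] \<and> hd ys = hd xs \<and> last ys = last xs \<and> walk R ys \<and> set ys \<subseteq> set xs"
proof (induction xs rule: induct_list012)
  case (2 x)
  then show ?case by (intro exI[of _ "[x]"]) auto
next
  case (3 x y zs)
  then obtain ys where ys: "distinct ys" "ys \<noteq> []" "hd ys = y" "last ys = last (y # zs)"
    "walk R ys" "set ys \<subseteq> set (y # zs)" by auto
  show ?case
  proof (cases "x \<in> set ys")
    case True
    then obtain us vs where uv: "ys = us @ x # vs" by (meson split_list)
    show ?thesis
      apply (intro exI[of _ "x # vs"])
      using ys uv walk_suffix[of R us "x # vs"] by auto
  next
    case False
    then obtain ys' where ys': "ys = y # ys'" using ys by (cases ys) auto
    have "R x y" using 3(3) False ys' by auto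
    then show ?thesis
      apply (intro exI[of _ "x # ys"])
      using ys ys' False by auto
  qed
qed auto

lemma distinct_hd_last: "distinct xs \<Longrightarrow> length xs \<ge> 2 \<Longrightarrow> hd xs \<noteq> last xs"
proof -
  assume d: "distinct xs" and l: "length xs \<ge> 2"
  then obtain a b zs where xs: "xs = a # b # zs" by (metis One_nat_def Suc_1 Suc_le_length_iff)
  have "last xs \<in> set (b # zs)" using xs by simp
  then show ?thesis using d xs by auto
qed


lemma four_cycle:
  assumes cv: "cycle_convex (V \<times> W) (cart_edges E F) T"
    and gV: "graph V E" and gW: "graph W F"
    and ab: "E a b" and cd: "F c d"
    and T: "(a,c) \<in> T" "(b,c) \<in> T" "(a,d) \<in> T"
  shows "(b,d) \<in> T"
proof (rule ccontr)
  assume nb: "(b,d) \<notin> T"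
  have bd: "(b,d) \<in> V \<times> W" using gV gW ab cd unfolding graph_def by auto
  have neq: "a \<noteq> b" "c \<noteq> d" using gV gW ab cd unfolding graph_def by auto
  have "cycle_through (cart_edges E F) (T \<union> {(b,d)}) (b,d)"
    unfolding cycle_through_def
    apply (intro exI[of _ "[(b,d),(a,d),(a,c),(b,c)]"])
    using neq T ab cd gV gW unfolding graph_def cart_edges_def by auto
  then have "(b,d) \<in> cycle_interval (V \<times> W) (cart_edges E F) T"
    unfolding cycle_interval_def using bd nb by auto
  then show False using cv nb unfolding cycle_convex_def by auto
qed

lemma layer_convex1:
  assumes cv: "cycle_convex (V \<times> W) (cart_edges E F) T" and h: "h \<in> W"
  shows "cycle_convex V E {g. (g,h) \<in> T}"
proof -
  have sub: "T \<subseteq> V \<times> W" using cv unfolding cycle_convex_def by auto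
  have "w \<in> {g. (g,h) \<in> T}" if w: "w \<in> V" "cycle_through E ({g. (g,h) \<in> T} \<union> {w}) w" for w
  proof (rule ccontr)
    assume nw: "w \<notin> {g. (g,h) \<in> T}"
    obtain cs where cs: "distinct cs" "length cs \<ge> 3" "set cs \<subseteq> {g. (g,h) \<in> T} \<union> {w}"
      "hd cs = w" "walk E cs" "E (last cs) (hd cs)" using w(2) unfolding cycle_through_def by auto
    have ne: "cs \<noteq> []" using cs(2) by auto
    have "cycle_through (cart_edges E F) (T \<union> {(w,h)}) (w,h)"
      unfolding cycle_through_def
      apply (intro exI[of _ "map (\<lambda>g. (g,h)) cs"])
      using cs ne by (auto simp: distinct_map inj_on_def hd_map last_map cart_edges_def
          intro!: walk_map[of E])
    then have "(w,h) \<in> cycle_interval (V \<times> W) (cart_edges E F) T"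
      unfolding cycle_interval_def using w h nw by auto
    then show False using cv nw unfolding cycle_convex_def by auto
  qed
  then show ?thesis using sub unfolding cycle_convex_def cycle_interval_def by auto
qed

lemma layer_convex2:
  assumes cv: "cycle_convex (V \<times> W) (cart_edges E F) T" and g: "g \<in> V"
  shows "cycle_convex W F {h. (g,h) \<in> T}"
proof -
  have sub: "T \<subseteq> V \<times> W" using cv unfolding cycle_convex_def by auto
  have "w \<in> {h. (g,h) \<in> T}" if w: "w \<in> W" "cycle_through F ({h. (g,h) \<in> T} \<union> {w}) w" for w
  proof (rule ccontr)
    assume nw: "w \<notin> {h. (g,h) \<in> T}"
    obtain cs where cs: "distinct cs" "length cs \<ge> 3" "set cs \<subseteq> {h. (g,h) \<in> T} \<union> {w}"
      "hd cs = w" "walk F cs" "F (last cs) (hd cs)" using w(2) unfolding cycle_through_def by auto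
    have ne: "cs \<noteq> []" using cs(2) by auto
    have "cycle_through (cart_edges E F) (T \<union> {(g,w)}) (g,w)"
      unfolding cycle_through_def
      apply (intro exI[of _ "map (\<lambda>h. (g,h)) cs"])
      using cs ne by (auto simp: distinct_map inj_on_def hd_map last_map cart_edges_def
          intro!: walk_map[of F])
    then have "(g,w) \<in> cycle_interval (V \<times> W) (cart_edges E F) T"
      unfolding cycle_interval_def using w g nw by auto
    then show False using cv nw unfolding cycle_convex_def by auto
  qed
  then show ?thesis using sub unfolding cycle_convex_def cycle_interval_def by auto
qed

lemma C_cc_ge:
  assumes "finite V" "S \<subseteq> V" "S \<noteq> V" "cycle_convex V E S"
  shows "card S \<le> C_cc V E"
proof -
  have fin: "finite {card S | S. S \<subseteq> V \<and> S \<noteq> V \<and> cycle_convex V E S}"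
    by (rule finite_subset[of _ "card ` Pow V"]) (use assms in auto)
  show ?thesis unfolding C_cc_def by (rule Max_ge[OF fin]) (use assms in auto)
qed

lemma empty_convex: "cycle_convex V E {}"
proof -
  have "\<not> cycle_through E {w} w" for w
  proof
    assume "cycle_through E {w} w"
    then obtain cs where cs: "distinct cs" "length cs \<ge> 3" "set cs \<subseteq> {w}"
      unfolding cycle_through_def by auto
    have "length cs = card (set cs)" using cs(1) by (simp add: distinct_card)
    also have "\<dots> \<le> card {w}" by (rule card_mono) (use cs in auto)
    finally show False using cs(2) by simp
  qed
  then show ?thesis unfolding cycle_convex_def cycle_interval_def by auto
qed

lemma C_cc_attained:
  assumes "finite V" "V \<noteq> {}"
  shows "\<exists>S. S \<subseteq> V \<and> S \<noteq> V \<and> cycle_convex V E S \<and> card S = C_cc V E"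
proof -
  have fin: "finite {card S | S. S \<subseteq> V \<and> S \<noteq> V \<and> cycle_convex V E S}"
    by (rule finite_subset[of _ "card ` Pow V"]) (use assms in auto)
  have ne: "{card S | S. S \<subseteq> V \<and> S \<noteq> V \<and> cycle_convex V E S} \<noteq> {}"
    using assms empty_convex[of V E] by auto
  show ?thesis using Max_in[OF fin ne] unfolding C_cc_def by auto
qed


lemma product_convex1:
  assumes cv: "cycle_convex V E S"
  shows "cycle_convex (V \<times> W) (cart_edges E F) (S \<times> W)"
proof -
  have sub: "S \<subseteq> V" using cv unfolding cycle_convex_def by auto
  have False if p: "(g,h) \<in> V \<times> W" "(g,h) \<notin> S \<times> W"
      "cycle_through (cart_edges E F) (S \<times> W \<union> {(g,h)}) (g,h)" for g h
  proof -
    have gS: "g \<notin> S" using p by auto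
    obtain cs where cs: "distinct cs" "length cs \<ge> 3" "set cs \<subseteq> S \<times> W \<union> {(g,h)}"
      "hd cs = (g,h)" "walk (cart_edges E F) cs" "cart_edges E F (last cs) (hd cs)"
      using p(3) unfolding cycle_through_def by auto
    obtain rest where cs_eq: "cs = (g,h) # rest" using cs(2,4) by (cases cs) auto
    have rl: "length rest \<ge> 2" using cs(2) cs_eq by auto
    obtain c1 rest' where rest_eq: "rest = c1 # rest'" using rl by (cases rest) auto
    have dr: "distinct rest" "(g,h) \<notin> set rest" using cs(1) cs_eq by auto
    have setr: "set rest \<subseteq> S \<times> W" using cs(3) cs_eq dr(2) by auto
    have c1S: "fst c1 \<in> S" using setr rest_eq by auto
    have e1: "cart_edges E F (g,h) c1" using cs(5) cs_eq rest_eq by auto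
    then have E1: "E g (fst c1)" "snd c1 = h" using gS c1S unfolding cart_edges_def by auto
    define cl where "cl = last rest"
    have clr: "cl \<in> set rest" using rest_eq cl_def by auto
    have last_cs: "last cs = cl" using cs_eq rest_eq cl_def by auto
    have clS: "fst cl \<in> S" using setr clr by auto
    have E2: "E (fst cl) g" "snd cl = h" using cs(6) cs(4) last_cs gS clS unfolding cart_edges_def by auto
    have "c1 \<noteq> cl" using distinct_hd_last[OF dr(1) rl] rest_eq cl_def by auto
    then have fne: "fst c1 \<noteq> fst cl" using E1(2) E2(2) by (metis prod.expand)
    have wr: "walk (cart_edges E F) rest" using cs(5) cs_eq walk_ConsD by metis
    have wm: "walk (\<lambda>x y. E x y \<or> x = y) (map fst rest)"
      by (rule walk_map[OF wr]) (auto simp: cart_edges_def)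
    obtain ys where ys: "distinct ys" "ys \<noteq> []" "hd ys = hd (map fst rest)"
      "last ys = last (map fst rest)" "walk E ys" "set ys \<subseteq> set (map fst rest)"
      using walk_to_path[OF wm] rest_eq by auto
    have ys2: "hd ys = fst c1" "last ys = fst cl" using ys(3,4) rest_eq cl_def
      by (auto simp: last_map)
    have ysS: "set ys \<subseteq> S" using ys(6) setr by force
    have lys: "length ys \<ge> 2"
    proof (rule ccontr)
      assume "\<not> length ys \<ge> 2"
      then have "length ys = 1" using ys(2) by (cases ys) (auto simp: Suc_le_eq)
      then obtain y where "ys = [y]" by (metis One_nat_def length_0_conv length_Suc_conv)
      then show False using ys2 fne by auto
    qed
    obtain y ys' where yeq: "ys = y # ys'" using ys(2) by (cases ys) auto
    have "cycle_through E (S \<union> {g}) g"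
      unfolding cycle_through_def
      apply (intro exI[of _ "g # ys"])
      using ys ysS gS lys yeq ys2 E1 E2 by auto
    then have "g \<in> cycle_interval V E S" unfolding cycle_interval_def using p(1) gS by auto
    then show False using cv gS unfolding cycle_convex_def by auto
  qed
  then show ?thesis using sub unfolding cycle_convex_def cycle_interval_def by auto
qed

lemma product_convex2:
  assumes cv: "cycle_convex W F S"
  shows "cycle_convex (V \<times> W) (cart_edges E F) (V \<times> S)"
proof -
  have sub: "S \<subseteq> W" using cv unfolding cycle_convex_def by auto
  have False if p: "(h,g) \<in> V \<times> W" "(h,g) \<notin> V \<times> S"
      "cycle_through (cart_edges E F) (V \<times> S \<union> {(h,g)}) (h,g)" for g h
  proof -
    have gS: "g \<notin> S" using p by auto
    obtain cs where cs: "distinct cs" "length cs \<ge> 3" "set cs \<subseteq> V \<times> S \<union> {(h,g)}"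
      "hd cs = (h,g)" "walk (cart_edges E F) cs" "cart_edges E F (last cs) (hd cs)"
      using p(3) unfolding cycle_through_def by auto
    obtain rest where cs_eq: "cs = (h,g) # rest" using cs(2,4) by (cases cs) auto
    have rl: "length rest \<ge> 2" using cs(2) cs_eq by auto
    obtain c1 rest' where rest_eq: "rest = c1 # rest'" using rl by (cases rest) auto
    have dr: "distinct rest" "(h,g) \<notin> set rest" using cs(1) cs_eq by auto
    have setr: "set rest \<subseteq> V \<times> S" using cs(3) cs_eq dr(2) by auto
    have c1S: "snd c1 \<in> S" using setr rest_eq by auto
    have e1: "cart_edges E F (h,g) c1" using cs(5) cs_eq rest_eq by auto
    then have E1: "F g (snd c1)" "fst c1 = h" using gS c1S unfolding cart_edges_def by auto
    define cl where "cl = last rest"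
    have clr: "cl \<in> set rest" using rest_eq cl_def by auto
    have last_cs: "last cs = cl" using cs_eq rest_eq cl_def by auto
    have clS: "snd cl \<in> S" using setr clr by auto
    have E2: "F (snd cl) g" "fst cl = h" using cs(6) cs(4) last_cs gS clS unfolding cart_edges_def by auto
    have "c1 \<noteq> cl" using distinct_hd_last[OF dr(1) rl] rest_eq cl_def by auto
    then have fne: "snd c1 \<noteq> snd cl" using E1(2) E2(2) by (metis prod.expand)
    have wr: "walk (cart_edges E F) rest" using cs(5) cs_eq walk_ConsD by metis
    have wm: "walk (\<lambda>x y. F x y \<or> x = y) (map snd rest)"
      by (rule walk_map[OF wr]) (auto simp: cart_edges_def)
    obtain ys where ys: "distinct ys" "ys \<noteq> []" "hd ys = hd (map snd rest)"
      "last ys = last (map snd rest)" "walk F ys" "set ys \<subseteq> set (map snd rest)"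
      using walk_to_path[OF wm] rest_eq by auto
    have ys2: "hd ys = snd c1" "last ys = snd cl" using ys(3,4) rest_eq cl_def
      by (auto simp: last_map)
    have ysS: "set ys \<subseteq> S" using ys(6) setr by force
    have lys: "length ys \<ge> 2"
    proof (rule ccontr)
      assume "\<not> length ys \<ge> 2"
      then have "length ys = 1" using ys(2) by (cases ys) (auto simp: Suc_le_eq)
      then obtain y where "ys = [y]" by (metis One_nat_def length_0_conv length_Suc_conv)
      then show False using ys2 fne by auto
    qed
    obtain y ys' where yeq: "ys = y # ys'" using ys(2) by (cases ys) auto
    have "cycle_through F (S \<union> {g}) g"
      unfolding cycle_through_def
      apply (intro exI[of _ "g # ys"])
      using ys ysS gS lys yeq ys2 E1 E2 by auto
    then have "g \<in> cycle_interval W F S" unfolding cycle_interval_def using p(1) gS by auto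
    then show False using cv gS unfolding cycle_convex_def by auto
  qed
  then show ?thesis using sub unfolding cycle_convex_def cycle_interval_def by auto
qed


theorem mainTheorem12:
  fixes V :: "'a set" and E :: "'a \<Rightarrow> 'a \<Rightarrow> bool"
    and W :: "'b set" and F :: "'b \<Rightarrow> 'b \<Rightarrow> bool"
  assumes "graph V E" and "connected_graph V E" and "card V \<ge> 2"
    and "graph W F" and "connected_graph W F" and "card W \<ge> 2"
  shows "C_cc (cart_vertices V W) (cart_edges E F)
           = max (card W * C_cc V E) (card V * C_cc W F)"
proof -
  note gV = assms(1) and cV = assms(2) and gW = assms(4) and cW = assms(5)
  have fV: "finite V" and fW: "finite W" using gV gW unfolding graph_def by auto
  have neV: "V \<noteq> {}" and neW: "W \<noteq> {}" using assms(3,6) by auto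
  have fP: "finite (V \<times> W)" using fV fW by auto
  have neP: "V \<times> W \<noteq> {}" using neV neW by auto
  have ge1: "card W * C_cc V E \<le> C_cc (V \<times> W) (cart_edges E F)"
  proof -
    obtain S where S: "S \<subseteq> V" "S \<noteq> V" "cycle_convex V E S" "card S = C_cc V E"
      using C_cc_attained[OF fV neV] by blast
    have "card (S \<times> W) \<le> C_cc (V \<times> W) (cart_edges E F)"
    proof (rule C_cc_ge[OF fP])
      obtain x y where "x \<in> V" "x \<notin> S" "y \<in> W" using S(1,2) neW by blast
      then show "S \<times> W \<noteq> V \<times> W" by blast
    qed (use S product_convex1[OF S(3)] in auto)
    then show ?thesis using S(4) by (simp add: card_cartesian_product mult.commute)
  qed
  have ge2: "card V * C_cc W F \<le> C_cc (V \<times> W) (cart_edges E F)"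
  proof -
    obtain S where S: "S \<subseteq> W" "S \<noteq> W" "cycle_convex W F S" "card S = C_cc W F"
      using C_cc_attained[OF fW neW] by blast
    have "card (V \<times> S) \<le> C_cc (V \<times> W) (cart_edges E F)"
    proof (rule C_cc_ge[OF fP])
      obtain x y where "x \<in> W" "x \<notin> S" "y \<in> V" using S(1,2) neV by blast
      then show "V \<times> S \<noteq> V \<times> W" by blast
    qed (use S product_convex2[OF S(3)] in auto)
    then show ?thesis using S(4) by (simp add: card_cartesian_product)
  qed
  obtain T where T: "T \<subseteq> V \<times> W" "T \<noteq> V \<times> W" "cycle_convex (V \<times> W) (cart_edges E F) T"
    "card T = C_cc (V \<times> W) (cart_edges E F)"
    using C_cc_attained[OF fP neP] by blast
  have le: "card T \<le> max (card W * C_cc V E) (card V * C_cc W F)"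
  proof (cases "(\<exists>h0\<in>W. \<forall>g\<in>V. (g,h0) \<in> T) \<and> (\<exists>g0\<in>V. \<forall>h\<in>W. (g0,h) \<in> T)")
    case True
    then obtain h0 g0 where h0: "h0 \<in> W" "\<forall>g\<in>V. (g,h0) \<in> T"
      and g0: "g0 \<in> V" "\<forall>h\<in>W. (g0,h) \<in> T" by blast
    have step: "\<forall>g\<in>V. (g,d) \<in> T" if cd: "F c d" and Pc: "\<forall>g\<in>V. (g,c) \<in> T" for c d
    proof
      fix g assume g: "g \<in> V"
      obtain xs where xs: "xs \<noteq> []" "hd xs = g0" "last xs = g" "walk E xs"
        using cV g0(1) g unfolding connected_graph_def by blast
      have dW: "d \<in> W" using gW cd unfolding graph_def by auto
      have "(last xs, d) \<in> T"
      proof (rule walk_induct_last[OF xs(4) xs(1)])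
        show "(hd xs, d) \<in> T" using xs(2) g0(2) dW by auto
      next
        fix x y assume xy: "E x y" and x: "(x,d) \<in> T"
        have "x \<in> V" "y \<in> V" using gV xy unfolding graph_def by auto
        then show "(y,d) \<in> T"
          using four_cycle[OF T(3) gV gW xy cd] Pc x by auto
      qed
      then show "(g,d) \<in> T" using xs(3) by simp
    qed
    have "V \<times> W \<subseteq> T"
    proof
      fix p assume "p \<in> V \<times> W"
      then obtain g h where p: "p = (g,h)" "g \<in> V" "h \<in> W" by auto
      obtain xs where xs: "xs \<noteq> []" "hd xs = h0" "last xs = h" "walk F xs"
        using cW h0(1) p(3) unfolding connected_graph_def by blast
      have "\<forall>g\<in>V. (g, last xs) \<in> T"
        by (rule walk_induct_last[OF xs(4) xs(1)]) (use xs(2) h0(2) step in auto)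
      then show "p \<in> T" using p xs(3) by auto
    qed
    then show ?thesis using T(1,2) by auto
  next
    case False
    then have "\<not> (\<exists>h0\<in>W. \<forall>g\<in>V. (g,h0) \<in> T) \<or> \<not> (\<exists>g0\<in>V. \<forall>h\<in>W. (g0,h) \<in> T)"
      by blast
    then show ?thesis
    proof
      assume nh: "\<not> (\<exists>h0\<in>W. \<forall>g\<in>V. (g,h0) \<in> T)"
      have TU: "T = (\<Union>h\<in>W. {g. (g,h) \<in> T} \<times> {h})" using T(1) by auto
      have "card T \<le> (\<Sum>h\<in>W. card ({g. (g,h) \<in> T} \<times> {h}))"
        by (subst TU, rule card_UN_le[OF fW])
      also have "\<dots> = (\<Sum>h\<in>W. card {g. (g,h) \<in> T})"
        by (simp add: card_cartesian_product)
      also have "\<dots> \<le> card W * C_cc V E"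
      proof -
        have "card {g. (g,h) \<in> T} \<le> C_cc V E" if h: "h \<in> W" for h
          by (rule C_cc_ge[OF fV]) (use T(1) nh h layer_convex1[OF T(3) h] in auto)
        then show ?thesis using sum_bounded_above[of W "\<lambda>h. card {g. (g,h) \<in> T}" "C_cc V E"] by simp
      qed
      finally show ?thesis by simp
    next
      assume ng: "\<not> (\<exists>g0\<in>V. \<forall>h\<in>W. (g0,h) \<in> T)"
      have TU: "T = (\<Union>g\<in>V. {g} \<times> {h. (g,h) \<in> T})" using T(1) by auto
      have "card T \<le> (\<Sum>g\<in>V. card ({g} \<times> {h. (g,h) \<in> T}))"
        by (subst TU, rule card_UN_le[OF fV])
      also have "\<dots> = (\<Sum>g\<in>V. card {h. (g,h) \<in> T})"
        by (simp add: card_cartesian_product)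
      also have "\<dots> \<le> card V * C_cc W F"
      proof -
        have "card {h. (g,h) \<in> T} \<le> C_cc W F" if g: "g \<in> V" for g
          by (rule C_cc_ge[OF fW]) (use T(1) ng g layer_convex2[OF T(3) g] in auto)
        then show ?thesis using sum_bounded_above[of V "\<lambda>g. card {h. (g,h) \<in> T}" "C_cc W F"] by simp
      qed
      finally show ?thesis by simp
    qed
  qed
  show ?thesis unfolding cart_vertices_def using ge1 ge2 le T(4) by simp
qed

end
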